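(* For $n\ge1$ let $\Gamma_n(x):=\sum_{k=0}^{\lfloor\frac{n-1}{2}\rfloor}\gamma_{n,k}^Sx^k$, where the integers $\gamma^S_{n,k}$ are defined by $$\sum_{\pi\in\mathfrak{S}_n(2413,3142)}t^{\mathrm{des}(\pi)}=\sum_{k=0}^{\lfloor\frac{n-1}{2}\rfloor}\gamma_{n,k}^S\, t^k (1+t)^{n-1-2k}.$$ Then $\Gamma_1(x)=1$ and for $n\ge2$, $$\Gamma_n(x)=\Gamma_{n-1}(x)+x\sum_{j=1}^{n-2}\Gamma_j(x)\biggl(\Gamma_{n-j-1}(x)+\sum_{i=1}^{n-j-1}\Gamma_i(x)\Gamma_{n-j-i}(x)\biggr).$$
   Context: $\mathfrak{S}_n(2413,3142)$ is the set of permutations of $[n]$ avoiding the patterns $2413$ and $3142$; $\mathrm{des}(\pi)=\#\{i\in[n-1]:\pi_i>\pi_{i+1}\}$. *)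

theory Defs
  imports "HOL-Combinatorics.Multiset_Permutations" "HOL-Computational_Algebra.Polynomial"
begin

text \<open>Permutations of [n] in one-line notation: lists p with p ! (i-1) = pi_i.\<close>

definition contains_pattern :: "nat list \<Rightarrow> nat list \<Rightarrow> bool" where
  "contains_pattern p sigma \<longleftrightarrow>
     (\<exists>is :: nat list. length is = length sigma \<and> sorted_wrt (<) is \<and>
        (\<forall>i\<in>set is. i < length p) \<and>
        (\<forall>a b. a < length sigma \<longrightarrow> b < length sigma \<longrightarrow>
            (p ! (is ! a) < p ! (is ! b) \<longleftrightarrow> sigma ! a < sigma ! b)))"

definition avoiders :: "nat \<Rightarrow> nat list set" where
  "avoiders n = {p \<in> permutations_of_set {1..n}.
      \<not> contains_pattern p [2,4,1,3] \<and> \<not> contains_pattern p [3,1,4,2]}"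

definition des :: "nat list \<Rightarrow> nat" where
  "des p = card {i. i + 1 < length p \<and> p ! i > p ! (i + 1)}"

definition des_poly :: "nat \<Rightarrow> int poly" where
  "des_poly n = (\<Sum>p\<in>avoiders n. monom 1 (des p))"

definition is_gamma_coeffs :: "(nat \<Rightarrow> nat \<Rightarrow> int) \<Rightarrow> bool" where
  "is_gamma_coeffs g \<longleftrightarrow> (\<forall>n\<ge>1.
     des_poly n = (\<Sum>k\<le>(n - 1) div 2.
        smult (g n k) ([:0, 1:] ^ k * [:1, 1:] ^ (n - 1 - 2 * k))))"

definition Gamma :: "(nat \<Rightarrow> nat \<Rightarrow> int) \<Rightarrow> nat \<Rightarrow> int poly" where
  "Gamma g n = (\<Sum>k\<le>(n - 1) div 2. monom (g n k) k)"

end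

theory Submission
  imports Defs "HOL-Computational_Algebra.Formal_Power_Series"
begin


definition pat2413 :: "nat list \<Rightarrow> bool" where
  "pat2413 xs \<longleftrightarrow> (\<exists>a b c d. a<b \<and> b<c \<and> c<d \<and> d<length xs \<and>
      xs!c < xs!a \<and> xs!a < xs!d \<and> xs!d < xs!b)"
definition pat3142 :: "nat list \<Rightarrow> bool" where
  "pat3142 xs \<longleftrightarrow> (\<exists>a b c d. a<b \<and> b<c \<and> c<d \<and> d<length xs \<and>
      xs!b < xs!d \<and> xs!d < xs!a \<and> xs!a < xs!c)"

lemma less4: "(x::nat) < 4 \<longleftrightarrow> x = 0 \<or> x = 1 \<or> x = 2 \<or> x = 3" by auto

lemma len4: "length is = 4 \<Longrightarrow> \<exists>a b c d. is = [a,b,c,d]"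
  by (cases "is"; simp; rename_tac l; case_tac l; simp; rename_tac l; case_tac l; simp;
      rename_tac l; case_tac l; simp)

lemma cp2413: "contains_pattern p [2,4,1,3] \<longleftrightarrow> pat2413 p"
proof
  assume "contains_pattern p [2,4,1,3]"
  then have "\<exists>is. length is = 4 \<and> sorted_wrt (<) is \<and> (\<forall>i\<in>set is. i < length p) \<and>
     (\<forall>a b. a < 4 \<longrightarrow> b < 4 \<longrightarrow> (p ! (is ! a) < p ! (is ! b) \<longleftrightarrow> [2,4,1,3::nat] ! a < [2,4,1,3::nat] ! b))"
    unfolding contains_pattern_def by (simp add: numeral_eq_Suc)
  then obtain "is" where H: "length is = 4 \<and> sorted_wrt (<) is \<and> (\<forall>i\<in>set is. i < length p) \<and>
     (\<forall>a b. a < 4 \<longrightarrow> b < 4 \<longrightarrow> (p ! (is ! a) < p ! (is ! b) \<longleftrightarrow> [2,4,1,3::nat] ! a < [2,4,1,3::nat] ! b))" ..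
  then have L: "length is = 4" and S: "sorted_wrt (<) is" and B: "\<forall>i\<in>set is. i < length p"
    and R: "\<forall>a b. a < 4 \<longrightarrow> b < 4 \<longrightarrow> (p ! (is ! a) < p ! (is ! b) \<longleftrightarrow> [2,4,1,3::nat] ! a < [2,4,1,3::nat] ! b)"
    by auto
  from len4[OF L] obtain a b c d where I: "is = [a,b,c,d]" by blast
  have "p!c < p!a" using R[rule_format, of 2 0] I by simp
  moreover have "p!a < p!d" using R[rule_format, of 0 3] I by simp
  moreover have "p!d < p!b" using R[rule_format, of 3 1] I by simp
  ultimately show "pat2413 p" unfolding pat2413_def using S B I by auto
next
  assume "pat2413 p"
  then obtain a b c d where H: "a<b" "b<c" "c<d" "d<length p" "p!c < p!a" "p!a < p!d" "p!d < p!b"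
    unfolding pat2413_def by blast
  show "contains_pattern p [2,4,1,3]" unfolding contains_pattern_def
    apply (rule exI[of _ "[a,b,c,d]"])
    using H by (auto simp: numeral_eq_Suc less_Suc_eq)
qed

lemma cp3142: "contains_pattern p [3,1,4,2] \<longleftrightarrow> pat3142 p"
proof
  assume "contains_pattern p [3,1,4,2]"
  then have "\<exists>is. length is = 4 \<and> sorted_wrt (<) is \<and> (\<forall>i\<in>set is. i < length p) \<and>
     (\<forall>a b. a < 4 \<longrightarrow> b < 4 \<longrightarrow> (p ! (is ! a) < p ! (is ! b) \<longleftrightarrow> [3,1,4,2::nat] ! a < [3,1,4,2::nat] ! b))"
    unfolding contains_pattern_def by (simp add: numeral_eq_Suc)
  then obtain "is" where H: "length is = 4 \<and> sorted_wrt (<) is \<and> (\<forall>i\<in>set is. i < length p) \<and>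
     (\<forall>a b. a < 4 \<longrightarrow> b < 4 \<longrightarrow> (p ! (is ! a) < p ! (is ! b) \<longleftrightarrow> [3,1,4,2::nat] ! a < [3,1,4,2::nat] ! b))" ..
  then have L: "length is = 4" and S: "sorted_wrt (<) is" and B: "\<forall>i\<in>set is. i < length p"
    and R: "\<forall>a b. a < 4 \<longrightarrow> b < 4 \<longrightarrow> (p ! (is ! a) < p ! (is ! b) \<longleftrightarrow> [3,1,4,2::nat] ! a < [3,1,4,2::nat] ! b)"
    by auto
  from len4[OF L] obtain a b c d where I: "is = [a,b,c,d]" by blast
  have "p!b < p!d" using R[rule_format, of 1 3] I by simp
  moreover have "p!d < p!a" using R[rule_format, of 3 0] I by simp
  moreover have "p!a < p!c" using R[rule_format, of 0 2] I by simp
  ultimately show "pat3142 p" unfolding pat3142_def using S B I by auto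
next
  assume "pat3142 p"
  then obtain a b c d where H: "a<b" "b<c" "c<d" "d<length p" "p!b < p!d" "p!d < p!a" "p!a < p!c"
    unfolding pat3142_def by blast
  show "contains_pattern p [3,1,4,2]" unfolding contains_pattern_def
    apply (rule exI[of _ "[a,b,c,d]"])
    using H by (auto simp: numeral_eq_Suc less_Suc_eq)
qed


definition spl :: "bool \<Rightarrow> nat list \<Rightarrow> nat \<Rightarrow> bool" where
  "spl s xs k \<longleftrightarrow> 0<k \<and> k<length xs \<and>
     (\<forall>i j. i<k \<longrightarrow> k\<le>j \<longrightarrow> j<length xs \<longrightarrow> (if s then xs!j < xs!i else xs!i < xs!j))"

lemma pat_prefix:
  assumes "\<not> pat2413 (ys@[v])" "\<not> pat3142 (ys@[v])"
  shows "\<not> pat2413 ys" "\<not> pat3142 ys"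
proof -
  show "\<not> pat2413 ys"
  proof
    assume "pat2413 ys"
    then obtain a b c d where "a<b" "b<c" "c<d" "d<length ys" "ys!c < ys!a" "ys!a < ys!d" "ys!d < ys!b"
      unfolding pat2413_def by blast
    then have "pat2413 (ys@[v])" unfolding pat2413_def
      by (intro exI[of _ a] exI[of _ b] exI[of _ c] exI[of _ d]) (simp add: nth_append)
    with assms show False by simp
  qed
  show "\<not> pat3142 ys"
  proof
    assume "pat3142 ys"
    then obtain a b c d where "a<b" "b<c" "c<d" "d<length ys" "ys!b < ys!d" "ys!d < ys!a" "ys!a < ys!c"
      unfolding pat3142_def by blast
    then have "pat3142 (ys@[v])" unfolding pat3142_def
      by (intro exI[of _ a] exI[of _ b] exI[of _ c] exI[of _ d]) (simp add: nth_append)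
    with assms show False by simp
  qed
qed

lemma caseB_plus:
  assumes D: "distinct (ys@[v])" and n: "length ys = n" "n \<ge> 1"
    and B: "\<forall>i j. i<j \<longrightarrow> j<n \<longrightarrow> \<not> (v < ys!i \<and> ys!j < v)"
  shows "\<exists>k. spl False (ys@[v]) k \<or> spl True (ys@[v]) k"
proof (cases "\<forall>i<n. v < ys!i")
  case True
  have "spl True (ys@[v]) n" unfolding spl_def using True n by (auto simp: nth_append)
  then show ?thesis by blast
next
  case False
  then obtain i0 where i0: "i0 < n" "\<not> v < ys!i0" by blast
  have vne: "\<And>i. i < n \<Longrightarrow> ys!i \<noteq> v" using D n by (auto simp: in_set_conv_nth)
  define m where "m = (LEAST i. i = n \<or> v < ys!i)"
  have Pm: "m = n \<or> v < ys!m" unfolding m_def by (rule LeastI[of _ n]) simp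
  have mle: "m \<le> n" unfolding m_def by (rule Least_le) simp
  have small: "ys!i < v" if "i < m" for i
  proof -
    have "\<not> (i = n \<or> v < ys!i)" using not_less_Least[OF that[unfolded m_def]] by blast
    then show ?thesis using vne[of i] that mle by auto
  qed
  have big: "v < ys!j" if "m \<le> j" "j < n" for j
  proof -
    have mn: "m < n" and vm: "v < ys!m" using Pm that by auto
    show ?thesis
    proof (rule ccontr)
      assume "\<not> v < ys!j"
      then have "ys!j < v" using vne[of j] that by auto
      moreover have "m \<noteq> j" using vm calculation by auto
      moreover have "m < j" using \<open>m \<noteq> j\<close> that(1) by simp
      ultimately show False using B[rule_format, of m j] vm that by auto
    qed
  qed
  have m0: "0 < m"
  proof (rule ccontr)
    assume "\<not> 0 < m"
    then have "m = 0" by simp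
    then have "v < ys!i0" using big[of i0] i0 by simp
    then show False using i0 by simp
  qed
  have "spl False (ys@[v]) m" unfolding spl_def using m0 mle n
    apply (auto simp: nth_append)
    apply (metis small big less_trans not_le)+
    done
  then show ?thesis by blast
qed

lemma caseB_minus:
  assumes D: "distinct (ys@[v])" and n: "length ys = n" "n \<ge> 1"
    and B: "\<forall>i j. i<j \<longrightarrow> j<n \<longrightarrow> \<not> (ys!i < v \<and> v < ys!j)"
  shows "\<exists>k. spl False (ys@[v]) k \<or> spl True (ys@[v]) k"
proof (cases "\<forall>i<n. ys!i < v")
  case True
  have "spl False (ys@[v]) n" unfolding spl_def using True n by (auto simp: nth_append)
  then show ?thesis by blast
next
  case False
  then obtain i0 where i0: "i0 < n" "\<not> ys!i0 < v" by blast
  have vne: "\<And>i. i < n \<Longrightarrow> ys!i \<noteq> v" using D n by (auto simp: in_set_conv_nth)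
  define m where "m = (LEAST i. i = n \<or> ys!i < v)"
  have Pm: "m = n \<or> ys!m < v" unfolding m_def by (rule LeastI[of _ n]) simp
  have mle: "m \<le> n" unfolding m_def by (rule Least_le) simp
  have small: "v < ys!i" if "i < m" for i
  proof -
    have "\<not> (i = n \<or> ys!i < v)" using not_less_Least[OF that[unfolded m_def]] by blast
    then show ?thesis using vne[of i] that mle by auto
  qed
  have big: "ys!j < v" if "m \<le> j" "j < n" for j
  proof -
    have mn: "m < n" and vm: "ys!m < v" using Pm that by auto
    show ?thesis
    proof (rule ccontr)
      assume "\<not> ys!j < v"
      then have "v < ys!j" using vne[of j] that by auto
      moreover have "m \<noteq> j" using vm calculation by auto
      moreover have "m < j" using \<open>m \<noteq> j\<close> that(1) by simp
      ultimately show False using B[rule_format, of m j] vm that by auto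
    qed
  qed
  have m0: "0 < m"
  proof (rule ccontr)
    assume "\<not> 0 < m"
    then have "m = 0" by simp
    then have "ys!i0 < v" using big[of i0] i0 by simp
    then show False using i0 by simp
  qed
  have "spl True (ys@[v]) m" unfolding spl_def using m0 mle n
    apply (auto simp: nth_append)
    apply (metis small big less_trans not_le)+
    done
  then show ?thesis by blast
qed

lemma key_decomp:
  "distinct xs \<Longrightarrow> length xs \<ge> 2 \<Longrightarrow> \<not> pat2413 xs \<Longrightarrow> \<not> pat3142 xs \<Longrightarrow>
   \<exists>k. spl False xs k \<or> spl True xs k"
proof (induction xs rule: rev_induct)
  case Nil
  then show ?case by simp
next
  case (snoc v ys)
  define n where "n = length ys"
  have n1: "n \<ge> 1" using snoc.prems n_def by simp
  have D: "distinct (ys@[v])" using snoc.prems by simp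
  have vne: "\<And>i. i < n \<Longrightarrow> ys!i \<noteq> v" using D n_def by (auto simp: in_set_conv_nth)
  show ?case
  proof (cases "n = 1")
    case True
    have "ys!0 \<noteq> v" using vne True by simp
    then have "spl False (ys@[v]) 1 \<or> spl True (ys@[v]) 1"
      unfolding spl_def using True n_def by (auto simp: nth_append)
    then show ?thesis by blast
  next
    case False
    then have "length ys \<ge> 2" using n1 n_def by simp
    moreover have "distinct ys" using D by simp
    moreover note pp = pat_prefix[OF snoc.prems(3,4)]
    ultimately obtain k where "spl False ys k \<or> spl True ys k" using snoc.IH by blast
    then show ?thesis
    proof
      assume S: "spl False ys k"
      show ?thesis
      proof (cases "\<exists>i j. i<j \<and> j<n \<and> v < ys!i \<and> ys!j < v")
        case True
        then obtain i j where ij: "i<j" "j<n" "v < ys!i" "ys!j < v" by blast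
        show ?thesis
        proof (cases "j < k")
          case True
          have "k < n" using S n_def unfolding spl_def by simp
          then have "ys!i < ys!k" using S True ij n_def unfolding spl_def by auto
          then have "pat3142 (ys@[v])" unfolding pat3142_def using ij True \<open>k<n\<close> n_def
            by (intro exI[of _ i] exI[of _ j] exI[of _ k] exI[of _ n]) (simp add: nth_append)
          then show ?thesis using snoc.prems by simp
        next
          case False
          have "spl False (ys@[v]) k" using S False ij n_def unfolding spl_def
            apply (auto simp: nth_append)
            by (metis less_trans not_le)
          then show ?thesis by blast
        qed
      next
        case False
        then show ?thesis using caseB_plus[OF D n_def[symmetric] n1] by blast
      qed
    next
      assume S: "spl True ys k"
      show ?thesis
      proof (cases "\<exists>i j. i<j \<and> j<n \<and> ys!i < v \<and> v < ys!j")
        case True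
        then obtain i j where ij: "i<j" "j<n" "ys!i < v" "v < ys!j" by blast
        show ?thesis
        proof (cases "j < k")
          case True
          have "k < n" using S n_def unfolding spl_def by simp
          then have "ys!k < ys!i" using S True ij n_def unfolding spl_def by auto
          then have "pat2413 (ys@[v])" unfolding pat2413_def using ij True \<open>k<n\<close> n_def
            by (intro exI[of _ i] exI[of _ j] exI[of _ k] exI[of _ n]) (simp add: nth_append)
          then show ?thesis using snoc.prems by simp
        next
          case False
          have "spl True (ys@[v]) k" using S False ij n_def unfolding spl_def
            apply (auto simp: nth_append)
            by (metis less_trans not_le)
          then show ?thesis by blast
        qed
      next
        case False
        then show ?thesis using caseB_minus[OF D n_def[symmetric] n1] by blast
      qed
    qed
  qed
qed


lemma pat2413_map_add: "pat2413 (map (\<lambda>x. x + c) xs) = pat2413 xs"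
proof
  assume "pat2413 (map (\<lambda>x. x + c) xs)"
  then obtain a b e d where H: "a<b" "b<e" "e<d" "d<length xs" "(map (\<lambda>x. x + c) xs)!e < (map (\<lambda>x. x + c) xs)!a" "(map (\<lambda>x. x + c) xs)!a < (map (\<lambda>x. x + c) xs)!d" "(map (\<lambda>x. x + c) xs)!d < (map (\<lambda>x. x + c) xs)!b"
    unfolding pat2413_def length_map by blast
  then show "pat2413 xs" unfolding pat2413_def
    by (intro exI[of _ a] exI[of _ b] exI[of _ e] exI[of _ d]) simp
next
  assume "pat2413 xs"
  then obtain a b e d where H: "a<b" "b<e" "e<d" "d<length xs" "xs!e < xs!a" "xs!a < xs!d" "xs!d < xs!b"
    unfolding pat2413_def by blast
  then show "pat2413 (map (\<lambda>x. x + c) xs)" unfolding pat2413_def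
    by (intro exI[of _ a] exI[of _ b] exI[of _ e] exI[of _ d]) simp
qed

lemma pat2413_app1: assumes "pat2413 xs" shows "pat2413 (xs @ ys)"
proof -
  obtain a b e d where H: "a<b" "b<e" "e<d" "d<length xs" "xs!e < xs!a" "xs!a < xs!d" "xs!d < xs!b"
    using assms unfolding pat2413_def by blast
  show ?thesis unfolding pat2413_def
    by (intro exI[of _ a] exI[of _ b] exI[of _ e] exI[of _ d]) (use H in \<open>simp add: nth_append\<close>)
qed

lemma pat3142_map_add: "pat3142 (map (\<lambda>x. x + c) xs) = pat3142 xs"
proof
  assume "pat3142 (map (\<lambda>x. x + c) xs)"
  then obtain a b e d where H: "a<b" "b<e" "e<d" "d<length xs" "(map (\<lambda>x. x + c) xs)!b < (map (\<lambda>x. x + c) xs)!d" "(map (\<lambda>x. x + c) xs)!d < (map (\<lambda>x. x + c) xs)!a" "(map (\<lambda>x. x + c) xs)!a < (map (\<lambda>x. x + c) xs)!e"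
    unfolding pat3142_def length_map by blast
  then show "pat3142 xs" unfolding pat3142_def
    by (intro exI[of _ a] exI[of _ b] exI[of _ e] exI[of _ d]) simp
next
  assume "pat3142 xs"
  then obtain a b e d where H: "a<b" "b<e" "e<d" "d<length xs" "xs!b < xs!d" "xs!d < xs!a" "xs!a < xs!e"
    unfolding pat3142_def by blast
  then show "pat3142 (map (\<lambda>x. x + c) xs)" unfolding pat3142_def
    by (intro exI[of _ a] exI[of _ b] exI[of _ e] exI[of _ d]) simp
qed

lemma pat3142_app1: assumes "pat3142 xs" shows "pat3142 (xs @ ys)"
proof -
  obtain a b e d where H: "a<b" "b<e" "e<d" "d<length xs" "xs!b < xs!d" "xs!d < xs!a" "xs!a < xs!e"
    using assms unfolding pat3142_def by blast
  show ?thesis unfolding pat3142_def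
    by (intro exI[of _ a] exI[of _ b] exI[of _ e] exI[of _ d]) (use H in \<open>simp add: nth_append\<close>)
qed

lemma pat2413_app2: assumes "pat2413 ys" shows "pat2413 (xs @ ys)"
proof -
  obtain a b c d where H: "a<b" "b<c" "c<d" "d<length ys" "ys!c < ys!a" "ys!a < ys!d" "ys!d < ys!b"
    using assms unfolding pat2413_def by blast
  show ?thesis unfolding pat2413_def
    by (rule exI[of _ "a + length xs"], rule exI[of _ "b + length xs"], rule exI[of _ "c + length xs"],
        rule exI[of _ "d + length xs"]) (use H in \<open>simp add: nth_append\<close>)
qed
lemma pat3142_app2: assumes "pat3142 ys" shows "pat3142 (xs @ ys)"
proof -
  obtain a b c d where H: "a<b" "b<c" "c<d" "d<length ys" "ys!b < ys!d" "ys!d < ys!a" "ys!a < ys!c"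
    using assms unfolding pat3142_def by blast
  show ?thesis unfolding pat3142_def
    by (rule exI[of _ "a + length xs"], rule exI[of _ "b + length xs"], rule exI[of _ "c + length xs"],
        rule exI[of _ "d + length xs"]) (use H in \<open>simp add: nth_append\<close>)
qed

lemma spl_rel: "spl s xs k \<Longrightarrow> i < k \<Longrightarrow> k \<le> j \<Longrightarrow> j < length xs \<Longrightarrow>
   (if s then xs!j < xs!i else xs!i < xs!j)"
  unfolding spl_def by blast

lemma pat2413_split:
  assumes S: "spl s xs k" and P: "pat2413 xs"
  shows "pat2413 (take k xs) \<or> pat2413 (drop k xs)"
proof -
  obtain a b c d where H: "a<b" "b<c" "c<d" "d<length xs" "xs!c < xs!a" "xs!a < xs!d" "xs!d < xs!b"
    using P unfolding pat2413_def by blast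
  have kl: "k < length xs" using S unfolding spl_def by simp
  show ?thesis
  proof (cases "d < k")
    case True
    then have "pat2413 (take k xs)" unfolding pat2413_def using H
      by (intro exI[of _ a] exI[of _ b] exI[of _ c] exI[of _ d]) simp
    then show ?thesis by simp
  next
    case dk: False
    show ?thesis
    proof (cases "k \<le> a")
      case True
      have e: "k + (a-k) = a" "k + (b-k) = b" "k + (c-k) = c" "k + (d-k) = d" using True H by auto
      have f: "a-k < b-k" "b-k < c-k" "c-k < d-k" "d-k < length (drop k xs)"
          "drop k xs ! (c-k) < drop k xs ! (a-k)" "drop k xs ! (a-k) < drop k xs ! (d-k)" "drop k xs ! (d-k) < drop k xs ! (b-k)"
        using H True e by simp_all
      have "pat2413 (drop k xs)" unfolding pat2413_def using f by blast
      then show ?thesis by simp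
    next
      case ak: False
      have False
      proof (cases s)
        case True
        have r: "\<And>i j. i < k \<Longrightarrow> k \<le> j \<Longrightarrow> j < length xs \<Longrightarrow> xs!j < xs!i"
          using spl_rel[OF S] True by fastforce
        have "xs!d < xs!a" using r[of a d] ak dk H by simp
        then show False using H by simp
      next
        case False
        have r: "\<And>i j. i < k \<Longrightarrow> k \<le> j \<Longrightarrow> j < length xs \<Longrightarrow> xs!i < xs!j"
          using spl_rel[OF S] False by fastforce
        show False
        proof (cases "c < k")
          case True
          have "xs!b < xs!d" using r[of b d] True dk H by simp
          then show False using H by simp
        next
          case False
          have "xs!a < xs!c" using r[of a c] False ak H by simp
          then show False using H by simp
        qed
      qed
      then show ?thesis ..
    qed
  qed
qed

lemma pat3142_split:
  assumes S: "spl s xs k" and P: "pat3142 xs"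
  shows "pat3142 (take k xs) \<or> pat3142 (drop k xs)"
proof -
  obtain a b c d where H: "a<b" "b<c" "c<d" "d<length xs" "xs!b < xs!d" "xs!d < xs!a" "xs!a < xs!c"
    using P unfolding pat3142_def by blast
  have kl: "k < length xs" using S unfolding spl_def by simp
  show ?thesis
  proof (cases "d < k")
    case True
    then have "pat3142 (take k xs)" unfolding pat3142_def using H
      by (intro exI[of _ a] exI[of _ b] exI[of _ c] exI[of _ d]) simp
    then show ?thesis by simp
  next
    case dk: False
    show ?thesis
    proof (cases "k \<le> a")
      case True
      have e: "k + (a-k) = a" "k + (b-k) = b" "k + (c-k) = c" "k + (d-k) = d" using True H by auto
      have f: "a-k < b-k" "b-k < c-k" "c-k < d-k" "d-k < length (drop k xs)"
          "drop k xs ! (b-k) < drop k xs ! (d-k)" "drop k xs ! (d-k) < drop k xs ! (a-k)" "drop k xs ! (a-k) < drop k xs ! (c-k)"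
        using H True e by simp_all
      have "pat3142 (drop k xs)" unfolding pat3142_def using f by blast
      then show ?thesis by simp
    next
      case ak: False
      have False
      proof (cases s)
        case False
        have r: "\<And>i j. i < k \<Longrightarrow> k \<le> j \<Longrightarrow> j < length xs \<Longrightarrow> xs!i < xs!j"
          using spl_rel[OF S] False by fastforce
        have "xs!a < xs!d" using r[of a d] ak dk H by simp
        then show False using H by simp
      next
        case True
        have r: "\<And>i j. i < k \<Longrightarrow> k \<le> j \<Longrightarrow> j < length xs \<Longrightarrow> xs!j < xs!i"
          using spl_rel[OF S] True by fastforce
        show False
        proof (cases "b < k")
          case True
          have "xs!d < xs!b" using r[of b d] True dk H by simp
          then show False using H by simp
        next
          case False
          have "xs!c < xs!a" using r[of a c] False ak H by simp
          then show False using H by simp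
        qed
      qed
      then show ?thesis ..
    qed
  qed
qed


definition avp :: "nat list \<Rightarrow> bool" where "avp p \<longleftrightarrow> \<not> pat2413 p \<and> \<not> pat3142 p"

definition isperm :: "nat \<Rightarrow> nat list \<Rightarrow> bool" where
  "isperm n p \<longleftrightarrow> set p = {1..n} \<and> distinct p"

lemma avoiders_eq: "avoiders n = {p. isperm n p \<and> avp p}"
  unfolding avoiders_def avp_def isperm_def permutations_of_set_def cp2413 cp3142 by auto

lemma isperm_len: "isperm n p \<Longrightarrow> length p = n"
  unfolding isperm_def by (metis card_atLeastAtMost diff_Suc_1 distinct_card)

definition dsum :: "bool \<Rightarrow> nat list \<Rightarrow> nat list \<Rightarrow> nat list" where
  "dsum s x y = (if s then map (\<lambda>v. v + length y) x @ y else x @ map (\<lambda>v. v + length x) y)"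

lemma spl_map_add: "spl s (map (\<lambda>x. x + c) xs) k \<longleftrightarrow> spl s xs k"
  unfolding spl_def by auto

lemma spl_take: "spl s p k' \<Longrightarrow> k' < k \<Longrightarrow> k \<le> length p \<Longrightarrow> spl s (take k p) k'"
  unfolding spl_def by auto

lemma spl_take_rev: assumes "spl s p k" "spl s (take k p) j" shows "spl s p j"
proof -
  have jk: "0 < j" "j < k" "k < length p" using assms unfolding spl_def by auto
  show ?thesis unfolding spl_def
  proof (intro conjI allI impI)
    show "0 < j" "j < length p" using jk by auto
    fix i l assume il: "i < j" "j \<le> l" "l < length p"
    show "if s then p ! l < p ! i else p ! i < p ! l"
    proof (cases "l < k")
      case True
      then show ?thesis using assms(2) il unfolding spl_def by auto
    next
      case False
      then show ?thesis using assms(1) il jk unfolding spl_def by auto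
    qed
  qed
qed

lemma take_dsum: "take (length x) (dsum s x y) = (if s then map (\<lambda>v. v + length y) x else x)"
  unfolding dsum_def by auto
lemma drop_dsum: "drop (length x) (dsum s x y) = (if s then y else map (\<lambda>v. v + length x) y)"
  unfolding dsum_def by auto
lemma length_dsum: "length (dsum s x y) = length x + length y"
  unfolding dsum_def by auto

lemma dsum_spl:
  assumes "isperm m x" "isperm l y" "m > 0" "l > 0"
  shows "spl s (dsum s x y) m"
proof -
  have lx: "length x = m" and ly: "length y = l" using assms isperm_len by auto
  have sx: "set x = {1..m}" and sy: "set y = {1..l}" using assms unfolding isperm_def by auto
  show ?thesis unfolding spl_def
  proof (intro conjI allI impI)
    show "0 < m" "m < length (dsum s x y)" using assms lx ly length_dsum by auto
    fix i j assume ij: "i < m" "m \<le> j" "j < length (dsum s x y)"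
    have xi: "x!i \<in> {1..m}" using sx ij lx nth_mem by (metis)
    have yj: "y!(j-m) \<in> {1..l}" using sy ij lx ly length_dsum nth_mem
      by (metis add.commute less_diff_conv2)
    show "if s then dsum s x y ! j < dsum s x y ! i else dsum s x y ! i < dsum s x y ! j"
      using xi yj ij lx ly unfolding dsum_def by (auto simp: nth_append)
  qed
qed

lemma dsum_isperm:
  assumes "isperm m x" "isperm l y"
  shows "isperm (m+l) (dsum s x y)"
proof -
  have lx: "length x = m" and ly: "length y = l" using assms isperm_len by auto
  have sx: "set x = {1..m}" and sy: "set y = {1..l}" using assms unfolding isperm_def by auto
  have dx: "distinct x" and dy: "distinct y" using assms unfolding isperm_def by auto
  have im1: "(\<lambda>v. v + c) ` {1..a} = {c+1..c+a}" for a c :: nat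
    by (auto simp: image_iff intro!: bexI[of _ "_ - c"])
  show ?thesis
  proof (cases s)
    case True
    have "set (dsum s x y) = {l+1..l+m} \<union> {1..l}" using True sx sy lx ly im1[of l m]
      unfolding dsum_def by (simp add: add.commute)
    also have "\<dots> = {1..m+l}" by auto
    finally show ?thesis unfolding isperm_def dsum_def using True dx dy sx sy lx ly
      by (auto simp: distinct_map inj_on_def)
  next
    case False
    have "set (dsum s x y) = {1..m} \<union> {m+1..m+l}" using False sx sy lx ly im1[of m l]
      unfolding dsum_def by (simp add: add.commute)
    also have "\<dots> = {1..m+l}" by auto
    finally show ?thesis unfolding isperm_def dsum_def using False dx dy sx sy lx ly
      by (auto simp: distinct_map inj_on_def)
  qed
qed

lemma avp_dsum:
  assumes "isperm m x" "isperm l y" "m > 0" "l > 0"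
  shows "avp (dsum s x y) \<longleftrightarrow> avp x \<and> avp y"
proof -
  have lx: "length x = m" using assms isperm_len by auto
  have S: "spl s (dsum s x y) m" by (rule dsum_spl[OF assms])
  have td: "dsum s x y = take m (dsum s x y) @ drop m (dsum s x y)" by simp
  show ?thesis
  proof
    assume A: "avp (dsum s x y)"
    have "avp (take m (dsum s x y))"
      using A pat2413_app1[of "take m (dsum s x y)" "drop m (dsum s x y)", unfolded append_take_drop_id]
        pat3142_app1[of "take m (dsum s x y)" "drop m (dsum s x y)", unfolded append_take_drop_id] unfolding avp_def by blast
    moreover have "avp (drop m (dsum s x y))"
      using A pat2413_app2[of "drop m (dsum s x y)" "take m (dsum s x y)", unfolded append_take_drop_id]
        pat3142_app2[of "drop m (dsum s x y)" "take m (dsum s x y)", unfolded append_take_drop_id] unfolding avp_def by blast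
    ultimately have "avp (take m (dsum s x y))" "avp (drop m (dsum s x y))" by blast+
    then show "avp x \<and> avp y" using take_dsum[of x s y] drop_dsum[of x s y] lx
      unfolding avp_def by (auto simp: pat2413_map_add pat3142_map_add split: if_splits)
  next
    assume A: "avp x \<and> avp y"
    then have "avp (take m (dsum s x y))" "avp (drop m (dsum s x y))"
      using take_dsum[of x s y] drop_dsum[of x s y] lx
      unfolding avp_def by (auto simp: pat2413_map_add pat3142_map_add)
    then show "avp (dsum s x y)" using pat2413_split[OF S] pat3142_split[OF S]
      unfolding avp_def by blast
  qed
qed

fun desf :: "nat list \<Rightarrow> nat" where
  "desf (x # y # zs) = (if y < x then 1 else 0) + desf (y # zs)"
| "desf _ = 0"

lemma des_desf: "des p = desf p"
proof (induction p rule: desf.induct)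
  case (1 x y zs)
  define S where "S = {i. i + 1 < length (y#zs) \<and> (y#zs) ! (i+1) < (y#zs) ! i}"
  have e: "{i. i + 1 < length (x#y#zs) \<and> (x#y#zs) ! (i+1) < (x#y#zs) ! i}
      = {i. i = 0 \<and> y < x} \<union> Suc ` S"
  proof (rule set_eqI)
    fix i show "i \<in> {i. i + 1 < length (x#y#zs) \<and> (x#y#zs) ! (i+1) < (x#y#zs) ! i} \<longleftrightarrow>
      i \<in> {i. i = 0 \<and> y < x} \<union> Suc ` S"
      unfolding S_def by (cases i) auto
  qed
  have fS: "finite S" unfolding S_def by (rule finite_subset[of _ "{..<length (y#zs)}"]) auto
  have "card ({i. i = 0 \<and> y < x} \<union> Suc ` S) = card {i. i = (0::nat) \<and> y < x} + card (Suc ` S)"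
    by (rule card_Un_disjoint) (use fS in auto)
  moreover have "card {i. i = (0::nat) \<and> y < x} = (if y < x then 1 else 0)" by auto
  moreover have "card (Suc ` S) = card S" by (simp add: card_image)
  moreover have "des (y#zs) = card S" unfolding des_def S_def by simp
  ultimately show ?case using 1 e unfolding des_def by simp
qed (auto simp: des_def)

lemma desf_app: "desf (xs @ ys) = desf xs + desf ys + (if xs \<noteq> [] \<and> ys \<noteq> [] \<and> hd ys < last xs then 1 else 0)"
proof (induction xs)
  case Nil
  then show ?case by simp
next
  case (Cons x xs)
  then show ?case by (cases xs; cases ys) auto
qed

lemma desf_map_add: "desf (map (\<lambda>x. x + c) xs) = desf xs"
  by (induction xs rule: desf.induct) auto

lemma desf_dsum:
  assumes "isperm m x" "isperm l y" "m > 0" "l > 0"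
  shows "desf (dsum s x y) = desf x + desf y + (if s then 1 else 0)"
proof -
  have lx: "length x = m" and ly: "length y = l" using assms isperm_len by auto
  have sx: "set x = {1..m}" and sy: "set y = {1..l}" using assms unfolding isperm_def by auto
  have ne: "x \<noteq> []" "y \<noteq> []" using lx ly assms by auto
  have "last x \<in> {1..m}" "hd y \<in> {1..l}" using sx sy ne by auto
  then show ?thesis using ne lx ly unfolding dsum_def
    by (auto simp: desf_app desf_map_add last_map hd_map)
qed


lemma shift_perm:
  assumes "set ys = {c+1..c+m}" "distinct ys"
  shows "isperm m (map (\<lambda>v. v - c) ys)" "map (\<lambda>v. v + c) (map (\<lambda>v. v - c) ys) = ys"
proof -
  have gt: "\<forall>v\<in>set ys. c < v" using assms by auto
  show "map (\<lambda>v. v + c) (map (\<lambda>v. v - c) ys) = ys"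
    using gt by (induction ys) auto
  have "set (map (\<lambda>v. v - c) ys) = {1..m}"
    using assms(1) by (auto simp: image_iff intro!: bexI[of _ "_ + c"])
  moreover have "distinct (map (\<lambda>v. v - c) ys)"
    using assms gt by (auto simp: distinct_map inj_on_def)
  ultimately show "isperm m (map (\<lambda>v. v - c) ys)" unfolding isperm_def by simp
qed

lemma spl_decomp:
  assumes P: "isperm n p" and S: "spl s p k"
  shows "\<exists>x y. isperm k x \<and> isperm (n-k) y \<and> p = dsum s x y"
proof -
  have lp: "length p = n" using P isperm_len by auto
  have kn: "0 < k" "k < n" using S lp unfolding spl_def by auto
  define A where "A = set (take k p)"
  define B where "B = set (drop k p)"
  have tdp: "p = take k p @ drop k p" by simp
  have dp: "distinct p" and sp: "set p = {1..n}" using P unfolding isperm_def by auto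
  have dA: "distinct (take k p)" and dB: "distinct (drop k p)" and disj: "A \<inter> B = {}"
    using dp tdp unfolding A_def B_def by (metis distinct_append)+
  have AB: "A \<union> B = {1..n}" using sp tdp unfolding A_def B_def by (metis set_append)
  have cA: "card A = k" using dA kn lp unfolding A_def by (simp add: distinct_card)
  have cB: "card B = n - k" using dB kn lp unfolding B_def by (simp add: distinct_card)
  have rel: "if s then b < a else a < b" if aA: "a \<in> A" and bB: "b \<in> B" for a b
  proof -
    obtain i where i0: "i < length (take k p)" "take k p ! i = a"
      using aA unfolding A_def in_set_conv_nth by blast
    then have i: "i < k" "a = p ! i" using kn lp by auto
    obtain j where j0: "j < length (drop k p)" "drop k p ! j = b"
      using bB unfolding B_def in_set_conv_nth by blast
    then have j: "j < n - k" "b = p ! (k + j)" using kn lp by auto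
    show ?thesis using spl_rel[OF S, of i "k+j"] i j kn lp by auto
  qed
  show ?thesis
  proof (cases s)
    case False
    have "a \<le> k" if "a \<in> A" for a
    proof -
      have "B \<subseteq> {a<..n}" using rel[OF that] False AB by auto
      then have "card B \<le> card {a<..n}" by (intro card_mono) auto
      then show ?thesis using cB that AB kn by auto
    qed
    moreover have "a \<ge> 1" if "a \<in> A" for a using that AB by auto
    ultimately have "A \<subseteq> {1..k}" by auto
    then have Aeq: "A = {1..k}" using cA by (intro card_subset_eq) auto
    then have "B = {1..n} - {1..k}" using AB disj by blast
    then have Beq: "B = {k+1..k+(n-k)}" using kn by auto
    have sh: "isperm (n-k) (map (\<lambda>v. v - k) (drop k p))" "map (\<lambda>v. v + k) (map (\<lambda>v. v - k) (drop k p)) = drop k p"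
      using shift_perm[OF Beq[unfolded B_def] dB] by auto
    have "isperm k (take k p)" using Aeq dA unfolding A_def isperm_def by simp
    moreover have "p = dsum s (take k p) (map (\<lambda>v. v - k) (drop k p))"
      unfolding dsum_def using False sh(2) kn lp by simp
    ultimately show ?thesis using sh(1) by blast
  next
    case True
    have "b \<le> n - k" if "b \<in> B" for b
    proof -
      have "A \<subseteq> {b<..n}" using rel[OF _ that] True AB by auto
      then have "card A \<le> card {b<..n}" by (intro card_mono) auto
      then show ?thesis using cA that AB kn by auto
    qed
    moreover have "b \<ge> 1" if "b \<in> B" for b using that AB by auto
    ultimately have "B \<subseteq> {1..n-k}" by auto
    then have Beq: "B = {1..n-k}" using cB by (intro card_subset_eq) auto
    then have "A = {1..n} - {1..n-k}" using AB disj by blast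
    then have Aeq: "A = {(n-k)+1..(n-k)+k}" using kn by auto
    have sh: "isperm k (map (\<lambda>v. v - (n-k)) (take k p))"
      "map (\<lambda>v. v + (n-k)) (map (\<lambda>v. v - (n-k)) (take k p)) = take k p"
      using shift_perm[OF Aeq[unfolded A_def] dA] by auto
    have "isperm (n-k) (drop k p)" using Beq dB unfolding B_def isperm_def by simp
    moreover have "p = dsum s (map (\<lambda>v. v - (n-k)) (take k p)) (drop k p)"
      unfolding dsum_def using True sh(2) kn lp by simp
    ultimately show ?thesis using sh(1) by blast
  qed
qed


definition Dset :: "bool \<Rightarrow> nat \<Rightarrow> nat list set" where
  "Dset s n = {p \<in> avoiders n. \<exists>k. spl s p k}"
definition Iset :: "bool \<Rightarrow> nat \<Rightarrow> nat list set" where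
  "Iset s n = {p \<in> avoiders n. \<not> (\<exists>k. spl s p k)}"

lemma finite_avoiders: "finite (avoiders n)"
  by (rule finite_subset[of _ "permutations_of_set {1..n}"]) (auto simp: avoiders_def)

lemma finite_Iset: "finite (Iset s n)" unfolding Iset_def using finite_avoiders by simp
lemma finite_Dset: "finite (Dset s n)" unfolding Dset_def using finite_avoiders by simp

lemma dsum_inj:
  assumes "length x = length x'" "length y = length y'" "dsum s x y = dsum s x' y'"
  shows "x = x' \<and> y = y'"
proof (cases s)
  case True
  then have "map (\<lambda>v. v + length y) x = map (\<lambda>v. v + length y) x' \<and> y = y'"
    using assms unfolding dsum_def by simp
  then show ?thesis by (simp add: inj_map_eq_map inj_on_def)
next
  case False
  then have "x = x' \<and> map (\<lambda>v. v + length x) y = map (\<lambda>v. v + length x) y'"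
    using assms unfolding dsum_def by simp
  then show ?thesis by (simp add: inj_map_eq_map inj_on_def)
qed

lemma take_dsum_spl:
  assumes "spl s (take (length x) (dsum s x y)) j" shows "spl s x j"
  using assms take_dsum[of x s y] by (cases s) (simp_all add: spl_map_add)

lemma dsum_spl_x:
  assumes "isperm m x" "isperm l y" "m > 0" "l > 0" "spl s (dsum s x y) j" "j < m"
  shows "spl s x j"
proof -
  have lx: "length x = m" by (rule isperm_len[OF assms(1)])
  have ly: "length y = l" by (rule isperm_len[OF assms(2)])
  have "spl s (take m (dsum s x y)) j" using spl_take[OF assms(5) assms(6)] length_dsum lx ly by simp
  then show ?thesis using take_dsum_spl[where x=x and s=s and y=y and j=j] lx by simp
qed

lemma bij_D:
  "bij_betw (\<lambda>(x,y). dsum s x y) (\<Union>m\<in>{1..n-1}. Iset s m \<times> avoiders (n-m)) (Dset s n)"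
proof (rule bij_betwI')
  fix a b assume A: "a \<in> (\<Union>m\<in>{1..n-1}. Iset s m \<times> avoiders (n-m))" "b \<in> (\<Union>m\<in>{1..n-1}. Iset s m \<times> avoiders (n-m))"
  obtain x y where ab: "a = (x,y)" by (cases a)
  obtain x' y' where bb: "b = (x',y')" by (cases b)
  obtain m where m: "m \<in> {1..n-1}" "x \<in> Iset s m" "y \<in> avoiders (n-m)" using A(1) ab by auto
  obtain m' where m': "m' \<in> {1..n-1}" "x' \<in> Iset s m'" "y' \<in> avoiders (n-m')" using A(2) bb by auto
  have px: "isperm m x" "isperm (n-m) y" "isperm m' x'" "isperm (n-m') y'"
    using m m' unfolding Iset_def avoiders_eq by auto
  have nx: "\<not> spl s x j" "\<not> spl s x' j" for j using m m' unfolding Iset_def by auto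
  show "((\<lambda>(x,y). dsum s x y) a = (\<lambda>(x,y). dsum s x y) b) = (a = b)"
  proof
    assume E: "(\<lambda>(x,y). dsum s x y) a = (\<lambda>(x,y). dsum s x y) b"
    then have E': "dsum s x y = dsum s x' y'" using ab bb by simp
    have "m = m'"
    proof (rule ccontr)
      assume "m \<noteq> m'"
      then consider "m < m'" | "m' < m" by linarith
      then show False
      proof cases
        case 1
        have "spl s (dsum s x y) m" using dsum_spl[OF px(1,2)] m by auto
        then have "spl s x' m" using dsum_spl_x[OF px(3,4), where j=m] E' m' 1 by auto
        then show False using nx by blast
      next
        case 2
        have "spl s (dsum s x' y') m'" using dsum_spl[OF px(3,4)] m' by auto
        then have "spl s x m'" using dsum_spl_x[OF px(1,2), where j=m'] E' m 2 by auto
        then show False using nx by blast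
      qed
    qed
    then show "a = b" using dsum_inj[OF _ _ E'] px isperm_len ab bb by simp
  qed simp
next
  fix a assume A: "a \<in> (\<Union>m\<in>{1..n-1}. Iset s m \<times> avoiders (n-m))"
  obtain x y where ab: "a = (x,y)" by (cases a)
  obtain m where m: "m \<in> {1..n-1}" "x \<in> Iset s m" "y \<in> avoiders (n-m)" using A ab by auto
  have px: "isperm m x" "isperm (n-m) y" "avp x" "avp y"
    using m unfolding Iset_def avoiders_eq by auto
  have "isperm n (dsum s x y)" using dsum_isperm[OF px(1,2)] m by auto
  moreover have "avp (dsum s x y)" using avp_dsum[OF px(1,2)] px m by auto
  moreover have "spl s (dsum s x y) m" using dsum_spl[OF px(1,2)] m by auto
  ultimately show "(\<lambda>(x,y). dsum s x y) a \<in> Dset s n" unfolding Dset_def avoiders_eq ab by auto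
next
  fix p assume P: "p \<in> Dset s n"
  have pp: "isperm n p" "avp p" using P unfolding Dset_def avoiders_eq by auto
  obtain k0 where "spl s p k0" using P unfolding Dset_def by auto
  define k where "k = (LEAST k. spl s p k)"
  have Sk: "spl s p k" unfolding k_def by (rule LeastI) fact
  have kn: "0 < k" "k < n" using Sk isperm_len[OF pp(1)] unfolding spl_def by auto
  obtain x y where xy: "isperm k x" "isperm (n-k) y" "p = dsum s x y"
    using spl_decomp[OF pp(1) Sk] by blast
  have av: "avp x" "avp y" using avp_dsum[OF xy(1,2)] xy pp kn by auto
  have "\<not> spl s x j" for j
  proof
    assume J: "spl s x j"
    have lx: "length x = k" by (rule isperm_len[OF xy(1)])
    have "spl s (take k p) j" using J xy(3) lx take_dsum[of x s y]
      by (simp add: spl_map_add split: if_splits)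
    then have "spl s p j" by (rule spl_take_rev[OF Sk])
    moreover have "j < k" using J lx unfolding spl_def by simp
    ultimately show False using not_less_Least[of j "spl s p"] unfolding k_def by blast
  qed
  then have "x \<in> Iset s k" "y \<in> avoiders (n-k)" using xy av unfolding Iset_def avoiders_eq by auto
  then show "\<exists>a\<in>(\<Union>m\<in>{1..n-1}. Iset s m \<times> avoiders (n-m)). p = (\<lambda>(x,y). dsum s x y) a"
    using kn xy(3) by (intro bexI[of _ "(x,y)"]) auto
qed

lemma sum_Dset:
  "(\<Sum>p\<in>Dset s n. f p) = (\<Sum>m\<in>{1..n-1}. \<Sum>x\<in>Iset s m. \<Sum>y\<in>avoiders (n-m). f (dsum s x y))"
proof -
  have "(\<Sum>p\<in>Dset s n. f p) = (\<Sum>q\<in>(\<Union>m\<in>{1..n-1}. Iset s m \<times> avoiders (n-m)). f ((\<lambda>(x,y). dsum s x y) q))"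
    by (rule sum.reindex_bij_betw[OF bij_D, symmetric])
  also have "\<dots> = (\<Sum>m\<in>{1..n-1}. \<Sum>q\<in>Iset s m \<times> avoiders (n-m). f ((\<lambda>(x,y). dsum s x y) q))"
  proof (rule sum.UNION_disjoint)
    show "\<forall>i\<in>{1..n-1}. \<forall>j\<in>{1..n-1}. i \<noteq> j \<longrightarrow> Iset s i \<times> avoiders (n-i) \<inter> Iset s j \<times> avoiders (n-j) = {}"
    proof (intro ballI impI)
      fix i j :: nat assume "i \<noteq> j"
      have "x \<notin> Iset s j" if "x \<in> Iset s i" for x
        using that \<open>i \<noteq> j\<close> isperm_len[of i x] isperm_len[of j x] unfolding Iset_def avoiders_eq by auto
      then show "Iset s i \<times> avoiders (n-i) \<inter> Iset s j \<times> avoiders (n-j) = {}" by blast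
    qed
  qed (auto simp: finite_Iset finite_avoiders)
  also have "\<dots> = (\<Sum>m\<in>{1..n-1}. \<Sum>x\<in>Iset s m. \<Sum>y\<in>avoiders (n-m). f (dsum s x y))"
    by (simp add: sum.cartesian_product split_def)
  finally show ?thesis .
qed

definition AP :: "nat \<Rightarrow> int poly" where "AP n = (\<Sum>p\<in>avoiders n. monom 1 (desf p))"
definition DP :: "bool \<Rightarrow> nat \<Rightarrow> int poly" where "DP s n = (\<Sum>p\<in>Dset s n. monom 1 (desf p))"
definition IP :: "bool \<Rightarrow> nat \<Rightarrow> int poly" where "IP s n = (\<Sum>p\<in>Iset s n. monom 1 (desf p))"

lemma AP_des_poly: "des_poly n = AP n"
  unfolding des_poly_def AP_def des_desf ..

lemma sum_sum_prod: "(\<Sum>x\<in>X. \<Sum>y\<in>Y. c * f x * g y) = (c::'a::comm_ring_1) * sum f X * sum g Y"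
proof -
  have "c * sum f X * sum g Y = c * (sum f X * sum g Y)" by (simp add: mult.assoc)
  also have "\<dots> = c * (\<Sum>x\<in>X. \<Sum>y\<in>Y. f x * g y)" by (simp add: sum_product)
  also have "\<dots> = (\<Sum>x\<in>X. \<Sum>y\<in>Y. c * (f x * g y))" by (simp add: sum_distrib_left)
  finally show ?thesis by (simp add: mult.assoc)
qed

lemma DP_rec: "DP s n = (\<Sum>m\<in>{1..n-1}. (if s then [:0,1:] else 1) * IP s m * AP (n-m))"
proof -
  have "DP s n = (\<Sum>m\<in>{1..n-1}. \<Sum>x\<in>Iset s m. \<Sum>y\<in>avoiders (n-m). monom 1 (desf (dsum s x y)))"
    unfolding DP_def by (rule sum_Dset)
  also have "\<dots> = (\<Sum>m\<in>{1..n-1}. \<Sum>x\<in>Iset s m. \<Sum>y\<in>avoiders (n-m).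
      (if s then [:0,1:] else 1) * monom 1 (desf x) * monom 1 (desf y))"
  proof (intro sum.cong refl)
    fix m x y assume A: "m \<in> {1..n-1}" "x \<in> Iset s m" "y \<in> avoiders (n-m)"
    have px: "isperm m x" "isperm (n-m) y" using A unfolding Iset_def avoiders_eq by auto
    have "desf (dsum s x y) = desf x + desf y + (if s then 1 else 0)"
      using desf_dsum[OF px] A by auto
    then show "monom 1 (desf (dsum s x y)) = (if s then [:0,1:] else 1) * monom 1 (desf x) * monom 1 (desf y)"
      by (auto simp: mult_monom monom_altdef algebra_simps power_add)
  qed
  also have "\<dots> = (\<Sum>m\<in>{1..n-1}. (if s then [:0,1:] else 1) * IP s m * AP (n-m))"
    unfolding IP_def AP_def by (rule sum.cong[OF refl], rule sum_sum_prod)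
  finally show ?thesis .
qed

lemma spl_excl: "spl False p k \<Longrightarrow> spl True p k' \<Longrightarrow> False"
  unfolding spl_def
  by (metis add_diff_inverse_nat less_diff_conv2 less_nat_zero_code linorder_not_le not_less_iff_gr_or_eq
      order.asym less_imp_le_nat diff_less zero_less_one order.strict_trans)

lemma has_spl: "n \<ge> 2 \<Longrightarrow> p \<in> avoiders n \<Longrightarrow> \<exists>k. spl False p k \<or> spl True p k"
proof -
  assume n: "n \<ge> 2" and p: "p \<in> avoiders n"
  have "isperm n p" "avp p" using p unfolding avoiders_eq by auto
  then have "distinct p" "length p \<ge> 2" "\<not> pat2413 p" "\<not> pat3142 p"
    using isperm_len n unfolding isperm_def avp_def by auto
  then show ?thesis by (rule key_decomp)
qed

lemma Iset_eq: "m \<ge> 2 \<Longrightarrow> Iset s m = Dset (\<not> s) m"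
proof -
  assume m: "m \<ge> 2"
  show ?thesis
  proof (rule set_eqI)
    fix p
    show "p \<in> Iset s m \<longleftrightarrow> p \<in> Dset (\<not> s) m"
      using has_spl[OF m, of p] spl_excl[of p] unfolding Iset_def Dset_def by (cases s) auto
  qed
qed

lemma avoiders_split: "n \<ge> 2 \<Longrightarrow> avoiders n = Dset False n \<union> Dset True n"
  using has_spl unfolding Dset_def by blast

lemma AP_split: "n \<ge> 2 \<Longrightarrow> AP n = DP False n + DP True n"
proof -
  assume n: "n \<ge> 2"
  have "Dset False n \<inter> Dset True n = {}" unfolding Dset_def using spl_excl by blast
  then show ?thesis unfolding AP_def DP_def avoiders_split[OF n]
    by (rule sum.union_disjoint[OF finite_Dset finite_Dset])
qed

lemma avoiders_1: "avoiders 1 = {[1]}"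
proof -
  have "isperm 1 p \<longleftrightarrow> p = [1]" for p
  proof
    assume "isperm 1 p"
    then have "length p = 1" "set p = {1}" using isperm_len unfolding isperm_def by auto
    then show "p = [1]" by (cases p) auto
  qed (auto simp: isperm_def)
  moreover have "avp [1]" unfolding avp_def pat2413_def pat3142_def by auto
  ultimately show ?thesis unfolding avoiders_eq by auto
qed

lemma avoiders_0: "avoiders 0 = {[]}"
  unfolding avoiders_eq isperm_def avp_def pat2413_def pat3142_def by auto

lemma AP_0: "AP 0 = 1" unfolding AP_def avoiders_0 by simp
lemma AP_1: "AP 1 = 1" unfolding AP_def avoiders_1 by simp
lemma IP_1: "IP s 1 = 1"
proof -
  have "Iset s 1 = {[1]}" unfolding Iset_def avoiders_1 spl_def by auto
  then show ?thesis unfolding IP_def by simp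
qed
lemma IP_ge2: "m \<ge> 2 \<Longrightarrow> IP s m = DP (\<not> s) m" unfolding IP_def DP_def using Iset_eq by simp
lemma DP_small: "n \<le> 1 \<Longrightarrow> DP s n = 0"
proof -
  assume "n \<le> 1"
  then have "Dset s n = {}" unfolding Dset_def spl_def avoiders_eq using isperm_len by fastforce
  then show ?thesis unfolding DP_def by simp
qed


unbundle fps_syntax


definition FA :: "int poly fps" where "FA = Abs_fps (\<lambda>n. if n = 0 then 0 else AP n)"
definition FD :: "bool \<Rightarrow> int poly fps" where "FD s = Abs_fps (DP s)"
definition FI :: "bool \<Rightarrow> int poly fps" where "FI s = Abs_fps (\<lambda>n. if n = 0 then 0 else IP s n)"

lemma FI_eq: "FI s = fps_X + FD (\<not> s)"
proof (rule fps_ext)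
  fix n
  show "FI s $ n = (fps_X + FD (\<not> s)) $ n"
  proof (cases "n \<le> 1")
    case True
    then have "n = 0 \<or> n = 1" by auto
    then show ?thesis unfolding FI_def FD_def using DP_small[of n] IP_1 by auto
  next
    case False
    then show ?thesis unfolding FI_def FD_def using IP_ge2[of n s] by auto
  qed
qed

lemma sum_trim:
  fixes n :: nat
  assumes "g 0 = 0" "g n = 0"
  shows "(\<Sum>i=0..n. g i) = (\<Sum>i\<in>{1..n-1}. g i)"
proof (rule sum.mono_neutral_right)
  show "\<forall>i\<in>{0..n} - {1..n-1}. g i = 0"
  proof
    fix i assume "i \<in> {0..n} - {1..n-1}"
    then have "i \<le> n" "\<not> (1 \<le> i \<and> i \<le> n - 1)" by auto
    then have "i = 0 \<or> i = n" by arith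
    then show "g i = 0" using assms by auto
  qed
qed auto

lemma FD_eq: "FD s = fps_const (if s then [:0,1:] else 1) * FI s * FA"
proof (rule fps_ext)
  fix n
  have "(FI s * FA) $ n = (\<Sum>i=0..n. FI s $ i * FA $ (n - i))" by (rule fps_mult_nth)
  also have "\<dots> = (\<Sum>i\<in>{1..n-1}. FI s $ i * FA $ (n - i))"
    by (rule sum_trim) (simp_all add: FI_def FA_def)
  also have "\<dots> = (\<Sum>i\<in>{1..n-1}. IP s i * AP (n - i))"
    by (rule sum.cong) (auto simp: FI_def FA_def)
  finally have e: "(FI s * FA) $ n = (\<Sum>i\<in>{1..n-1}. IP s i * AP (n - i))" .
  show "FD s $ n = (fps_const (if s then [:0,1:] else 1) * FI s * FA) $ n"
    unfolding mult.assoc fps_mult_left_const_nth e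
    unfolding FD_def fps_nth_Abs_fps DP_rec sum_distrib_left by (simp add: mult.assoc)
qed

lemma FA_eq: "FA = fps_X + FD False + FD True"
proof (rule fps_ext)
  fix n
  show "FA $ n = (fps_X + FD False + FD True) $ n"
  proof (cases "n \<le> 1")
    case True
    then have "n = 0 \<or> n = 1" by auto
    then show ?thesis unfolding FA_def FD_def using DP_small[of n] AP_1 by auto
  next
    case False
    then show ?thesis unfolding FA_def FD_def using AP_split[of n] by auto
  qed
qed

lemma FA_alg: "FA = fps_X + fps_X * FA + fps_const [:0,1:] * fps_X * FA
   + fps_const [:0,1:] * fps_X * FA^2 + fps_const [:0,1:] * FA^3"
proof -
  define A where "A = FA"
  define D where "D = FD False"
  define E where "E = FD True"
  define T where "T = fps_const ([:0,1:] :: int poly)"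
  define X where "X = (fps_X :: int poly fps)"
  have h1: "D = (X + E) * A" using FD_eq[of False] FI_eq[of False] unfolding D_def E_def A_def X_def by simp
  have h2: "E = T * (X + D) * A" using FD_eq[of True] FI_eq[of True] unfolding D_def E_def A_def X_def T_def by simp
  have h3: "A = X + D + E" using FA_eq unfolding D_def E_def A_def X_def by simp
  have "A = X + X * A + T * X * A + T * X * A^2 + T * A^3"
    using h1 h2 h3 by algebra
  then show ?thesis unfolding A_def X_def T_def .
qed


lemma FA_nth: "FA $ n = (if n = 0 then 0 else AP n)" unfolding FA_def by simp

lemma FA_sq_nth: "(FA^2) $ m = (\<Sum>i\<in>{1..m-1}. AP i * AP (m-i))"
proof -
  have "(FA^2) $ m = (\<Sum>i=0..m. FA $ i * FA $ (m - i))" unfolding power2_eq_square by (rule fps_mult_nth)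
  also have "\<dots> = (\<Sum>i\<in>{1..m-1}. FA $ i * FA $ (m - i))"
    by (rule sum_trim) (simp_all add: FA_nth)
  also have "\<dots> = (\<Sum>i\<in>{1..m-1}. AP i * AP (m-i))"
    by (rule sum.cong) (auto simp: FA_nth)
  finally show ?thesis .
qed

lemma FA_cube_nth:
  "(FA^3) $ n = (\<Sum>j\<in>{1..n-2}. AP j * (\<Sum>i\<in>{1..n-j-1}. AP i * AP (n-j-i)))"
proof -
  have "FA^3 = FA * FA^2" by (simp add: power3_eq_cube power2_eq_square)
  then have "(FA^3) $ n = (\<Sum>j=0..n. FA $ j * (FA^2) $ (n - j))" by (simp add: fps_mult_nth)
  also have "\<dots> = (\<Sum>j\<in>{1..n-2}. FA $ j * (FA^2) $ (n - j))"
  proof (rule sum.mono_neutral_right)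
    show "\<forall>j\<in>{0..n} - {1..n-2}. FA $ j * (FA^2) $ (n - j) = 0"
    proof
      fix j assume "j \<in> {0..n} - {1..n-2}"
      then have "j \<le> n" "\<not> (1 \<le> j \<and> j \<le> n - 2)" by auto
      then have "j = 0 \<or> n - j \<le> 1" by arith
      then show "FA $ j * (FA^2) $ (n - j) = 0"
      proof
        assume "j = 0" then show ?thesis by (simp add: FA_nth)
      next
        assume "n - j \<le> 1"
        then have "{1..n-j-1} = {}" by auto
        then show ?thesis by (simp add: FA_sq_nth)
      qed
    qed
  qed auto
  also have "\<dots> = (\<Sum>j\<in>{1..n-2}. AP j * (\<Sum>i\<in>{1..n-j-1}. AP i * AP (n-j-i)))"
    by (rule sum.cong) (auto simp: FA_nth FA_sq_nth)
  finally show ?thesis .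
qed

lemma ARec:
  assumes n: "n \<ge> 2"
  shows "AP n = AP (n-1) + [:0,1:] * AP (n-1) + [:0,1:] * (\<Sum>j\<in>{1..n-2}. AP j *
            (AP (n-j-1) + (\<Sum>i\<in>{1..n-j-1}. AP i * AP (n-j-i))))"
proof -
  define c where "c = ([:0,1:] :: int poly)"
  have "FA $ n = (fps_X + fps_X * FA + fps_const c * fps_X * FA
   + fps_const c * fps_X * FA^2 + fps_const c * FA^3) $ n"
    using FA_alg unfolding c_def by (metis)
  also have "\<dots> = AP (n-1) + c * AP (n-1) + c * (FA^2) $ (n-1) + c * (FA^3) $ n"
    using n by (simp add: mult.assoc FA_nth)
  also have "(FA^2) $ (n-1) = (\<Sum>j\<in>{1..n-2}. AP j * AP (n-j-1))"
    unfolding FA_sq_nth by (rule sum.cong) (auto simp: diff_commute)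
  finally have "AP n = AP (n-1) + c * AP (n-1) + c * ((\<Sum>j\<in>{1..n-2}. AP j * AP (n-j-1)) +
      (\<Sum>j\<in>{1..n-2}. AP j * (\<Sum>i\<in>{1..n-j-1}. AP i * AP (n-j-i))))"
    unfolding FA_cube_nth using n by (simp add: FA_nth distrib_left add.assoc)
  also have "(\<Sum>j\<in>{1..n-2}. AP j * AP (n-j-1)) +
      (\<Sum>j\<in>{1..n-2}. AP j * (\<Sum>i\<in>{1..n-j-1}. AP i * AP (n-j-i))) =
      (\<Sum>j\<in>{1..n-2}. AP j * (AP (n-j-1) + (\<Sum>i\<in>{1..n-j-1}. AP i * AP (n-j-i))))"
    by (simp add: sum.distrib distrib_left)
  finally show ?thesis unfolding c_def .
qed


function G :: "nat \<Rightarrow> int poly" where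
  "G n = (if n < 2 then (if n = 1 then 1 else 0) else
     G (n-1) + [:0,1:] * (\<Sum>j=1..n-2. G j * (G (n-j-1) + (\<Sum>i=1..n-j-1. G i * G (n-j-i)))))"
  by auto
termination by (relation "measure id") auto

declare G.simps[simp del]

lemma G1: "G 1 = 1" by (simp add: G.simps)
lemma G_rec: "n \<ge> 2 \<Longrightarrow> G n = G (n-1) + [:0,1:] * (\<Sum>j=1..n-2. G j * (G (n-j-1) + (\<Sum>i=1..n-j-1. G i * G (n-j-i))))"
  by (subst G.simps) simp

lemma div2_add: "(a::nat) div 2 + b div 2 \<le> (a + b) div 2" by presburger

lemma degree_G: "n \<ge> 1 \<Longrightarrow> degree (G n) \<le> (n-1) div 2"
proof (induction n rule: less_induct)
  case (less n)
  show ?case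
  proof (cases "n = 1")
    case True then show ?thesis by (simp add: G.simps)
  next
    case False
    then have n: "n \<ge> 2" using less.prems by simp
    have "degree (G (n-1)) \<le> (n-1-1) div 2" using less.IH[of "n-1"] n by simp
    also have "\<dots> \<le> (n-1) div 2" by (rule div_le_mono) simp
    finally have d1: "degree (G (n-1)) \<le> (n-1) div 2" .
    have d2: "degree (\<Sum>j=1..n-2. G j * (G (n-j-1) + (\<Sum>i=1..n-j-1. G i * G (n-j-i)))) \<le> (n-3) div 2"
    proof (rule degree_sum_le)
      fix j assume j: "j \<in> {1..n-2}"
      have dj: "degree (G j) \<le> (j-1) div 2" using less.IH[of j] j n by auto
      have dj2: "degree (G (n-j-1)) \<le> (n-j-2) div 2" using less.IH[of "n-j-1"] j n by auto
      have di: "degree (\<Sum>i=1..n-j-1. G i * G (n-j-i)) \<le> (n-j-2) div 2"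
      proof (rule degree_sum_le)
        fix i assume i: "i \<in> {1..n-j-1}"
        have "degree (G i) \<le> (i-1) div 2" using less.IH[of i] i j n by auto
        moreover have "degree (G (n-j-i)) \<le> (n-j-i-1) div 2" using less.IH[of "n-j-i"] i j n by auto
        ultimately have "degree (G i * G (n-j-i)) \<le> (i-1) div 2 + (n-j-i-1) div 2"
          using degree_mult_le[of "G i" "G (n-j-i)"] by linarith
        also have "\<dots> \<le> ((i-1) + (n-j-i-1)) div 2" by (rule div2_add)
        also have "(i-1) + (n-j-i-1) = n-j-2" using i j n by auto
        finally show "degree (G i * G (n-j-i)) \<le> (n-j-2) div 2" .
      qed simp
      have "degree (G (n-j-1) + (\<Sum>i=1..n-j-1. G i * G (n-j-i))) \<le> (n-j-2) div 2"
        by (rule degree_add_le[OF dj2 di])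
      then have "degree (G j * (G (n-j-1) + (\<Sum>i=1..n-j-1. G i * G (n-j-i)))) \<le> (j-1) div 2 + (n-j-2) div 2"
        using degree_mult_le[of "G j"] dj by (meson add_mono order_trans)
      also have "\<dots> \<le> ((j-1) + (n-j-2)) div 2" by (rule div2_add)
      also have "(j-1) + (n-j-2) = n-3" using j n by auto
      finally show "degree (G j * (G (n-j-1) + (\<Sum>i=1..n-j-1. G i * G (n-j-i)))) \<le> (n-3) div 2" .
    qed simp
    have "degree ([:0,1:] * (\<Sum>j=1..n-2. G j * (G (n-j-1) + (\<Sum>i=1..n-j-1. G i * G (n-j-i))))) \<le> (n-1) div 2"
    proof (cases "n = 2")
      case True then show ?thesis by simp
    next
      case False
      have "degree ([:0,1:] * (\<Sum>j=1..n-2. G j * (G (n-j-1) + (\<Sum>i=1..n-j-1. G i * G (n-j-i)))))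
         \<le> degree ([:0,1::int:]) + degree (\<Sum>j=1..n-2. G j * (G (n-j-1) + (\<Sum>i=1..n-j-1. G i * G (n-j-i))))"
        by (rule degree_mult_le)
      also have "\<dots> \<le> 1 + (n-3) div 2" using d2 by simp
      also have "\<dots> = (n-1) div 2" using n False by presburger
      finally show ?thesis .
    qed
    then show ?thesis using G_rec[OF n] d1 by (simp add: degree_add_le)
  qed
qed


definition ev :: "int poly \<Rightarrow> real \<Rightarrow> real" where
  "ev p t = poly (map_poly real_of_int p) t"

lemma mp_add: "map_poly (real_of_int) (p + q) = map_poly real_of_int p + map_poly real_of_int q"
  by (rule poly_eqI) (simp add: coeff_map_poly)
lemma mp_diff: "map_poly (real_of_int) (p - q) = map_poly real_of_int p - map_poly real_of_int q"
  by (rule poly_eqI) (simp add: coeff_map_poly)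
lemma mp_mult: "map_poly (real_of_int) (p * q) = map_poly real_of_int p * map_poly real_of_int q"
  by (rule poly_eqI) (simp add: coeff_map_poly coeff_mult)

lemma ev_add: "ev (p + q) t = ev p t + ev q t" unfolding ev_def mp_add by simp
lemma ev_diff: "ev (p - q) t = ev p t - ev q t" unfolding ev_def mp_diff by simp
lemma ev_mult: "ev (p * q) t = ev p t * ev q t" unfolding ev_def mp_mult by simp
lemma ev_0: "ev 0 t = 0" unfolding ev_def by simp
lemma ev_1: "ev 1 t = 1" unfolding ev_def by simp
lemma ev_X: "ev [:0,1:] t = t" unfolding ev_def by (simp add: map_poly_pCons)
lemma ev_X1: "ev [:1,1:] t = 1 + t" unfolding ev_def by (simp add: map_poly_pCons)
lemma ev_const: "ev [:c:] t = of_int c" unfolding ev_def by (simp add: map_poly_pCons)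
lemma ev_sum: "ev (sum f S) t = (\<Sum>x\<in>S. ev (f x) t)"
  by (induction S rule: infinite_finite_induct) (auto simp: ev_add ev_0)
lemma ev_pow: "ev (p ^ k) t = ev p t ^ k"
  by (induction k) (auto simp: ev_mult ev_1)
lemma ev_smult: "ev (smult c p) t = of_int c * ev p t"
proof -
  have "ev (smult c p) t = ev ([:c:] * p) t" by simp
  also have "\<dots> = ev [:c:] t * ev p t" by (rule ev_mult)
  finally show ?thesis by (simp add: ev_const)
qed
lemma ev_monom: "ev (monom c k) t = of_int c * t ^ k"
  unfolding ev_def by (simp add: map_poly_monom poly_monom)

lemma ev_as_sum:
  assumes "degree p \<le> K"
  shows "ev p t = (\<Sum>k\<le>K. of_int (coeff p k) * t ^ k)"
proof -
  have dm: "degree (map_poly real_of_int p) = degree p" by (rule degree_map_poly) simp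
  have "ev p t = (\<Sum>k\<le>degree p. of_int (coeff p k) * t ^ k)"
    unfolding ev_def poly_altdef dm by (simp add: coeff_map_poly)
  also have "\<dots> = (\<Sum>k\<le>K. of_int (coeff p k) * t ^ k)"
    by (rule sum.mono_neutral_left) (use assms in \<open>auto simp: coeff_eq_0\<close>)
  finally show ?thesis .
qed

lemma poly_eq_by_ev:
  assumes S: "infinite S" and E: "\<And>t. t \<in> S \<Longrightarrow> ev p t = ev q t"
  shows "p = q"
proof (rule ccontr)
  assume "p \<noteq> q"
  then have "p - q \<noteq> 0" by simp
  then have nz: "map_poly real_of_int (p - q) \<noteq> 0" by (simp add: map_poly_eq_0_iff)
  have "S \<subseteq> {x. poly (map_poly real_of_int (p - q)) x = 0}"
    using E by (auto simp: mp_diff ev_def)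
  moreover have "finite {x. poly (map_poly real_of_int (p - q)) x = 0}" by (rule poly_roots_finite[OF nz])
  ultimately show False using S finite_subset by blast
qed

lemma nonneg_infinite: "infinite {t::real. 0 \<le> t}"
proof -
  have "range real \<subseteq> {t::real. 0 \<le> t}" by auto
  moreover have "infinite (range real)" by (rule range_inj_infinite) (simp add: inj_on_def)
  ultimately show ?thesis using finite_subset by blast
qed

definition xf :: "real \<Rightarrow> real" where "xf t = t / (1 + t)^2"

lemma xf_inj: "inj_on xf {0..<1}"
proof (rule inj_onI)
  fix a b :: real assume ab: "a \<in> {0..<1}" "b \<in> {0..<1}" "xf a = xf b"
  have pa: "(1+a)^2 > 0" "(1+b)^2 > 0" using ab by auto
  then have "a * (1+b)^2 = b * (1+a)^2" using ab(3) unfolding xf_def by (simp add: field_simps)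
  then have "(a - b) * (1 - a * b) = 0" by (simp add: algebra_simps power2_eq_square)
  moreover have "a * b < 1"
  proof -
    have "a * b \<le> a" using ab by (intro mult_left_le) auto
    then show ?thesis using ab by auto
  qed
  ultimately show "a = b" by simp
qed


lemma xf_infinite: "infinite (xf ` {0..<1})"
proof -
  have "infinite {0..<1::real}" by simp
  then show ?thesis using finite_imageD[OF _ xf_inj] by blast
qed

lemma AG: "n \<ge> 1 \<Longrightarrow> 0 \<le> t \<Longrightarrow> ev (AP n) t = (1+t)^(n-1) * ev (G n) (xf t)"
proof (induction n rule: less_induct)
  case (less n)
  show ?case
  proof (cases "n = 1")
    case True then show ?thesis using AP_1 G1 by (simp add: ev_1)
  next
    case False
    then have n: "n \<ge> 2" using less.prems by simp
    define q where "q = 1 + t"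
    define x where "x = xf t"
    have q0: "q > 0" using less.prems q_def by simp
    have tq: "t = x * q^2" unfolding x_def xf_def q_def using q0 q_def by (simp add: field_simps)
    have IH: "ev (AP k) t = q^(k-1) * ev (G k) x" if "1 \<le> k" "k < n" for k
      using less.IH[OF that(2) that(1) less.prems(2)] unfolding q_def x_def .
    define SA where "SA = (\<Sum>j\<in>{1..n-2}. ev (AP j) t *
            (ev (AP (n-j-1)) t + (\<Sum>i\<in>{1..n-j-1}. ev (AP i) t * ev (AP (n-j-i)) t)))"
    define SG where "SG = (\<Sum>j\<in>{1..n-2}. ev (G j) x *
            (ev (G (n-j-1)) x + (\<Sum>i\<in>{1..n-j-1}. ev (G i) x * ev (G (n-j-i)) x)))"
    have eA: "ev (AP n) t = ev (AP (n-1)) t + t * ev (AP (n-1)) t + t * SA"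
      unfolding SA_def by (subst ARec[OF n]) (simp only: ev_add ev_mult ev_sum ev_X)
    have eG: "ev (G n) x = ev (G (n-1)) x + x * SG"
      unfolding SG_def by (subst G_rec[OF n]) (simp only: ev_add ev_mult ev_sum ev_X)
    have key: "t * SA = q^(n-1) * x * SG"
    proof (cases "n = 2")
      case True then show ?thesis unfolding SA_def SG_def by simp
    next
      case False
      then have n3: "n \<ge> 3" using n by simp
      have "SA = (\<Sum>j\<in>{1..n-2}. q^(n-3) * (ev (G j) x *
            (ev (G (n-j-1)) x + (\<Sum>i\<in>{1..n-j-1}. ev (G i) x * ev (G (n-j-i)) x))))"
        unfolding SA_def
      proof (rule sum.cong[OF refl])
        fix j assume j: "j \<in> {1..n-2}"
        have inner: "(\<Sum>i\<in>{1..n-j-1}. ev (AP i) t * ev (AP (n-j-i)) t) =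
            q^(n-j-2) * (\<Sum>i\<in>{1..n-j-1}. ev (G i) x * ev (G (n-j-i)) x)"
          unfolding sum_distrib_left
        proof (rule sum.cong[OF refl])
          fix i assume i: "i \<in> {1..n-j-1}"
          have h1: "ev (AP i) t = q^(i-1) * ev (G i) x" using IH[of i] i j by auto
          have h2: "ev (AP (n-j-i)) t = q^(n-j-i-1) * ev (G (n-j-i)) x" using IH[of "n-j-i"] i j by auto
          have "ev (AP i) t * ev (AP (n-j-i)) t = (q^(i-1) * q^(n-j-i-1)) * (ev (G i) x * ev (G (n-j-i)) x)"
            unfolding h1 h2 by (simp add: algebra_simps)
          also have "q^(i-1) * q^(n-j-i-1) = q^(n-j-2)"
            unfolding power_add[symmetric] using i j by (intro arg_cong[where f="\<lambda>e. q^e"]) auto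
          finally show "ev (AP i) t * ev (AP (n-j-i)) t = q^(n-j-2) * (ev (G i) x * ev (G (n-j-i)) x)" .
        qed
        have a1: "ev (AP (n-j-1)) t = q^(n-j-2) * ev (G (n-j-1)) x"
        proof -
          have "1 \<le> n-j-1" "n-j-1 < n" using j n3 by auto
          note IH[OF this]
          moreover have "n-j-1-1 = n-j-2" by simp
          ultimately show ?thesis by simp
        qed
        have a2: "ev (AP j) t = q^(j-1) * ev (G j) x" using IH[of j] j n3 by auto
        have pw: "q^(j-1) * q^(n-j-2) = q^(n-3)"
          unfolding power_add[symmetric] using j n3 by (intro arg_cong[where f="\<lambda>e. q^e"]) auto
        show "ev (AP j) t * (ev (AP (n-j-1)) t + (\<Sum>i\<in>{1..n-j-1}. ev (AP i) t * ev (AP (n-j-i)) t)) =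
            q^(n-3) * (ev (G j) x * (ev (G (n-j-1)) x + (\<Sum>i\<in>{1..n-j-1}. ev (G i) x * ev (G (n-j-i)) x)))"
          unfolding inner a1 a2 pw[symmetric] by (simp add: algebra_simps)
      qed
      also have "\<dots> = q^(n-3) * SG" unfolding SG_def sum_distrib_left ..
      finally have "t * SA = x * q^2 * q^(n-3) * SG" using tq by simp
      also have "q^2 * q^(n-3) = q^(n-1)"
        unfolding power_add[symmetric] using n3 by (intro arg_cong[where f="\<lambda>e. q^e"]) auto
      then have "x * q^2 * q^(n-3) * SG = q^(n-1) * x * SG" by (simp add: algebra_simps)
      finally show ?thesis .
    qed
    have a: "ev (AP (n-1)) t = q^(n-2) * ev (G (n-1)) x"
    proof -
      have "1 \<le> n-1" "n-1 < n" using n by auto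
      note IH[OF this]
      moreover have "n-1-1 = n-2" by simp
      ultimately show ?thesis by simp
    qed
    have pw: "q * q^(n-2) = q^(n-1)" using n by (metis Suc_diff_le le_add_diff_inverse one_add_one plus_1_eq_Suc power_Suc Suc_1 diff_Suc_Suc)
    have "ev (AP n) t = q * ev (AP (n-1)) t + t * SA" unfolding eA q_def by (simp add: algebra_simps)
    also have "\<dots> = q^(n-1) * (ev (G (n-1)) x + x * SG)" unfolding a key pw[symmetric] by (simp add: algebra_simps)
    also have "\<dots> = q^(n-1) * ev (G n) x" unfolding eG ..
    finally show ?thesis unfolding q_def x_def .
  qed
qed


lemma expand_ev:
  assumes t: "0 \<le> t"
  shows "ev (\<Sum>k\<le>(n - 1) div 2. smult (c k) ([:0, 1:] ^ k * [:1, 1:] ^ (n - 1 - 2 * k))) t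
     = (1+t)^(n-1) * (\<Sum>k\<le>(n - 1) div 2. of_int (c k) * xf t ^ k)"
proof -
  have "ev (\<Sum>k\<le>(n - 1) div 2. smult (c k) ([:0, 1:] ^ k * [:1, 1:] ^ (n - 1 - 2 * k))) t
      = (\<Sum>k\<le>(n - 1) div 2. of_int (c k) * (t ^ k * (1+t) ^ (n - 1 - 2 * k)))"
    by (simp add: ev_sum ev_smult ev_mult ev_pow ev_X ev_X1)
  also have "\<dots> = (\<Sum>k\<le>(n - 1) div 2. (1+t)^(n-1) * (of_int (c k) * xf t ^ k))"
  proof (rule sum.cong[OF refl])
    fix k assume k: "k \<in> {..(n - 1) div 2}"
    have q0: "(1+t) \<noteq> 0" using t by simp
    have "(1+t)^(n-1) = (1+t)^(n - 1 - 2 * k) * ((1+t)^2)^k"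
      unfolding power_mult[symmetric] power_add[symmetric] using k by (intro arg_cong[where f="\<lambda>e. (1+t)^e"]) auto
    moreover have "xf t ^ k * ((1+t)^2)^k = t^k"
      unfolding xf_def power_mult_distrib[symmetric] using q0 by simp
    ultimately show "of_int (c k) * (t ^ k * (1+t) ^ (n - 1 - 2 * k)) = (1+t)^(n-1) * (of_int (c k) * xf t ^ k)"
      by (simp add: algebra_simps)
  qed
  also have "\<dots> = (1+t)^(n-1) * (\<Sum>k\<le>(n - 1) div 2. of_int (c k) * xf t ^ k)"
    by (simp add: sum_distrib_left)
  finally show ?thesis .
qed

lemma gamma_exists: "is_gamma_coeffs (\<lambda>n k. coeff (G n) k)"
  unfolding is_gamma_coeffs_def
proof (intro allI impI)
  fix n :: nat assume n: "n \<ge> 1"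
  show "des_poly n = (\<Sum>k\<le>(n - 1) div 2. smult (coeff (G n) k) ([:0, 1:] ^ k * [:1, 1:] ^ (n - 1 - 2 * k)))"
  proof (rule poly_eq_by_ev[of "{0..<1}"])
    fix t :: real assume t: "t \<in> {0..<1}"
    then have t0: "0 \<le> t" by simp
    have "ev (des_poly n) t = (1+t)^(n-1) * ev (G n) (xf t)" unfolding AP_des_poly by (rule AG[OF n t0])
    also have "ev (G n) (xf t) = (\<Sum>k\<le>(n - 1) div 2. of_int (coeff (G n) k) * xf t ^ k)"
      by (rule ev_as_sum[OF degree_G[OF n]])
    finally show "ev (des_poly n) t = ev (\<Sum>k\<le>(n - 1) div 2. smult (coeff (G n) k) ([:0, 1:] ^ k * [:1, 1:] ^ (n - 1 - 2 * k))) t"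
      unfolding expand_ev[OF t0] .
  qed simp
qed

lemma gamma_unique:
  assumes g: "is_gamma_coeffs g" and n: "n \<ge> 1"
  shows "Gamma g n = G n"
proof (rule poly_eq_by_ev[OF xf_infinite])
  fix x assume "x \<in> xf ` {0..<1}"
  then obtain t where t: "t \<in> {0..<1}" "x = xf t" by blast
  then have t0: "0 \<le> t" by simp
  have q: "(1+t)^(n-1) \<noteq> 0" using t0 by simp
  have eg: "ev (Gamma g n) x = (\<Sum>k\<le>(n - 1) div 2. of_int (g n k) * xf t ^ k)"
    unfolding Gamma_def t(2) by (simp add: ev_sum ev_monom)
  have d: "des_poly n = (\<Sum>k\<le>(n - 1) div 2. smult (g n k) ([:0, 1:] ^ k * [:1, 1:] ^ (n - 1 - 2 * k)))"
    using g n unfolding is_gamma_coeffs_def by blast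
  have "(1+t)^(n-1) * ev (Gamma g n) x = ev (des_poly n) t"
    unfolding eg d by (rule expand_ev[OF t0, symmetric])
  also have "\<dots> = (1+t)^(n-1) * ev (G n) x" unfolding AP_des_poly t(2) by (rule AG[OF n t0])
  finally have e: "(1+t)^(n-1) * ev (Gamma g n) x = (1+t)^(n-1) * ev (G n) x" .
  show "ev (Gamma g n) x = ev (G n) x" using e q mult_left_cancel by blast
qed

theorem corollary5p11:
  shows "(\<exists>g. is_gamma_coeffs g) \<and>
    (\<forall>g. is_gamma_coeffs g \<longrightarrow>
       Gamma g 1 = 1 \<and>
       (\<forall>n\<ge>2. Gamma g n = Gamma g (n - 1) +
          [:0, 1:] * (\<Sum>j=1..n-2. Gamma g j *
             (Gamma g (n - j - 1) + (\<Sum>i=1..n-j-1. Gamma g i * Gamma g (n - j - i))))))"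
proof (intro conjI allI impI)
  show "\<exists>g. is_gamma_coeffs g" using gamma_exists by blast
next
  fix g assume g: "is_gamma_coeffs g"
  have E: "Gamma g k = G k" if "k \<ge> 1" for k using gamma_unique[OF g that] .
  show "Gamma g 1 = 1" using E[of 1] G1 by simp
  fix n :: nat assume n: "n \<ge> 2"
  have S: "(\<Sum>j=1..n-2. Gamma g j * (Gamma g (n - j - 1) + (\<Sum>i=1..n-j-1. Gamma g i * Gamma g (n - j - i))))
    = (\<Sum>j=1..n-2. G j * (G (n - j - 1) + (\<Sum>i=1..n-j-1. G i * G (n - j - i))))"
  proof (rule sum.cong[OF refl])
    fix j assume j: "j \<in> {1..n-2}"
    have i: "(\<Sum>i=1..n-j-1. Gamma g i * Gamma g (n - j - i)) = (\<Sum>i=1..n-j-1. G i * G (n - j - i))"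
    proof (rule sum.cong[OF refl])
      fix i assume i: "i \<in> {1..n-j-1}"
      have "i \<ge> 1" "n - j - i \<ge> 1" using i j by auto
      then show "Gamma g i * Gamma g (n - j - i) = G i * G (n - j - i)" using E by simp
    qed
    have "j \<ge> 1" "n - j - 1 \<ge> 1" using j n by auto
    then show "Gamma g j * (Gamma g (n - j - 1) + (\<Sum>i=1..n-j-1. Gamma g i * Gamma g (n - j - i)))
      = G j * (G (n - j - 1) + (\<Sum>i=1..n-j-1. G i * G (n - j - i)))" unfolding i using E by simp
  qed
  have "n - 1 \<ge> 1" using n by simp
  then show "Gamma g n = Gamma g (n - 1) +
          [:0, 1:] * (\<Sum>j=1..n-2. Gamma g j *
             (Gamma g (n - j - 1) + (\<Sum>i=1..n-j-1. Gamma g i * Gamma g (n - j - i))))"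
    unfolding S using E[of n] E[of "n-1"] n G_rec[OF n] by simp
qed


end
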